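(* There is a reference point $(r_1,r_2)$ with $r_1\le -1$ and $r_2\le -1$ such that SEMO with the hypervolume contribution (w.r.t. this reference point) and NMUAR parent selection has a positive probability of stagnating, i.e. of never covering the whole Pareto front, on \textsc{OneMinMax} and on \textsc{LOTZ}.
   Context: Search space $\{0,1\}^n$; objectives maximised. $\textsc{OneMinMax}(x)=(\sum_ix_i,\,n-\sum_ix_i)$ (every point Pareto optimal). $\textsc{LOTZ}(x)=(\mathrm{LO}(x),\mathrm{TZ}(x))$, number of leading ones and trailing zeros; Pareto set $\{1^i0^{n-i}\}$. Dominance: $y$ dominates $x$ if $f_i(y)\ge f_i(x)$ for all $i$, strictly for some $i$; weakly dominates if $\ge$ in all. SEMO with diversity-based parent selection: start with uniform random $s$, $P=\{s\}$. Each iteration: compute the diversity score of each $x\in P$ w.r.t. $P$; choose a parent by the selection mechanism; create $s'$ by flipping one uniformly random bit; if $s'$ is not dominated by any member of $P$, add it and remove all members weakly dominated by $s'$. NMUAR: if the individuals of $P$ do not all have the same score, discard all with minimum score and select uniformly at random among the remaining; otherwise select uniformly at random from $P$. HVC with reference point $(r_1,r_2)$: sort population by increasing $f_1$ as $x_1,\dots,x_\mu$, set $f_1(x_0)=r_1$, $f_2(x_{\mu+1})=r_2$, $\mathrm{HVC}(x_i,P)=(f_1(x_i)-f_1(x_{i-1}))(f_2(x_i)-f_2(x_{i+1}))$. *)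

theory Defs
  imports "HOL-Probability.Probability_Mass_Function"
begin

definition bitstrings :: "nat \<Rightarrow> bool list set" where
  "bitstrings n = {xs. length xs = n}"

definition OneMinMax :: "nat \<Rightarrow> bool list \<Rightarrow> int \<times> int" where
  "OneMinMax n xs = (int (count_list xs True), int n - int (count_list xs True))"

definition LOTZ :: "bool list \<Rightarrow> int \<times> int" where
  "LOTZ xs = (int (length (takeWhile (\<lambda>b. b) xs)), int (length (takeWhile Not (rev xs))))"

definition dominates :: "('a \<Rightarrow> int \<times> int) \<Rightarrow> 'a \<Rightarrow> 'a \<Rightarrow> bool" where
  "dominates f y x \<longleftrightarrow> fst (f y) \<ge> fst (f x) \<and> snd (f y) \<ge> snd (f x)
      \<and> (fst (f y) > fst (f x) \<or> snd (f y) > snd (f x))"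

definition weakly_dominates :: "('a \<Rightarrow> int \<times> int) \<Rightarrow> 'a \<Rightarrow> 'a \<Rightarrow> bool" where
  "weakly_dominates f y x \<longleftrightarrow> fst (f y) \<ge> fst (f x) \<and> snd (f y) \<ge> snd (f x)"

definition pareto_front :: "nat \<Rightarrow> (bool list \<Rightarrow> int \<times> int) \<Rightarrow> (int \<times> int) set" where
  "pareto_front n f = f ` {x \<in> bitstrings n. \<not> (\<exists>y \<in> bitstrings n. dominates f y x)}"

definition covers_front :: "nat \<Rightarrow> (bool list \<Rightarrow> int \<times> int) \<Rightarrow> bool list set \<Rightarrow> bool" where
  "covers_front n f P \<longleftrightarrow> pareto_front n f \<subseteq> f ` P"

text \<open>With the population sorted by increasing f1, the predecessor of x contributes its f1
  value (or r1 if x is first), the successor contributes its f2 value (or r2 if x is last).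
  In SEMO populations objective vectors are pairwise distinct and mutually incomparable,
  so f1 values are distinct and predecessor/successor are well determined.\<close>
definition hvc :: "real \<Rightarrow> real \<Rightarrow> ('a \<Rightarrow> int \<times> int) \<Rightarrow> 'a set \<Rightarrow> 'a \<Rightarrow> real" where
  "hvc r1 r2 f P x =
    (let L = {fst (f y) | y. y \<in> P \<and> fst (f y) < fst (f x)};
         R = {y \<in> P. fst (f y) > fst (f x)};
         left = (if L = {} then r1 else real_of_int (Max L));
         right = (if R = {} then r2
                  else real_of_int (snd (f (SOME y. y \<in> R \<and> fst (f y) = Min ((\<lambda>z. fst (f z)) ` R)))))
     in (real_of_int (fst (f x)) - left) * (real_of_int (snd (f x)) - right))"

definition nmuar_select :: "('a \<Rightarrow> real) \<Rightarrow> 'a set \<Rightarrow> 'a pmf" where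
  "nmuar_select sc P =
    (if (\<forall>x \<in> P. \<forall>y \<in> P. sc x = sc y) then pmf_of_set P
     else pmf_of_set {x \<in> P. sc x \<noteq> Min (sc ` P)})"

definition mutate :: "nat \<Rightarrow> bool list \<Rightarrow> bool list pmf" where
  "mutate n x = map_pmf (\<lambda>i. x[i := \<not> x ! i]) (pmf_of_set {..<n})"

definition semo_update :: "('a \<Rightarrow> int \<times> int) \<Rightarrow> 'a set \<Rightarrow> 'a \<Rightarrow> 'a set" where
  "semo_update f P s' =
    (if \<exists>y \<in> P. dominates f y s' then P
     else insert s' {y \<in> P. \<not> weakly_dominates f s' y})"

definition semo_step :: "nat \<Rightarrow> (bool list \<Rightarrow> int \<times> int) \<Rightarrow> (bool list set \<Rightarrow> bool list \<Rightarrow> real)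
    \<Rightarrow> bool list set \<Rightarrow> bool list set pmf" where
  "semo_step n f score P =
    bind_pmf (nmuar_select (score P) P) (\<lambda>x. map_pmf (semo_update f P) (mutate n x))"

primrec semo_traj :: "nat \<Rightarrow> (bool list \<Rightarrow> int \<times> int) \<Rightarrow> (bool list set \<Rightarrow> bool list \<Rightarrow> real)
    \<Rightarrow> nat \<Rightarrow> bool list set list pmf" where
  "semo_traj n f score 0 = map_pmf (\<lambda>s. [{s}]) (pmf_of_set (bitstrings n))"
| "semo_traj n f score (Suc t) =
    bind_pmf (semo_traj n f score t)
      (\<lambda>tr. map_pmf (\<lambda>Q. tr @ [Q]) (semo_step n f score (last tr)))"

text \<open>Positive probability of never covering the Pareto front: the events
  "not covered during the first t iterations" decrease in t and their intersection is
  "never covered"; by continuity of measure its probability is the infimum over t, so it is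
  positive iff these probabilities are bounded below by some eps > 0.\<close>
definition stagnates_with_positive_prob ::
  "nat \<Rightarrow> (bool list \<Rightarrow> int \<times> int) \<Rightarrow> (bool list set \<Rightarrow> bool list \<Rightarrow> real) \<Rightarrow> bool" where
  "stagnates_with_positive_prob n f score \<longleftrightarrow>
    (\<exists>\<epsilon>::real > 0. \<forall>t.
       measure_pmf.prob (semo_traj n f score t) {tr. \<forall>P \<in> set tr. \<not> covers_front n f P} \<ge> \<epsilon>)"

end

theory Submission imports Defs begin

lemma hvc_two:
  fixes f :: "'a \<Rightarrow> int \<times> int"
  assumes fz: "f z = (0, int n)" and fx: "f x = (1, int n - 1)"
  shows "hvc a b f {z, x} z = (0 - a) * 1"
    and "hvc a b f {z, x} x = 1 * (real n - 1 - b)"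
proof -
  have xz: "x \<noteq> z" using fz fx by auto
  have L1: "{fst (f y) | y. y \<in> {z, x} \<and> fst (f y) < fst (f z)} = {}" using fz fx by auto
  have R1: "{y \<in> {z, x}. fst (f y) > fst (f z)} = {x}" using fz fx by auto
  have S: "(SOME y. y \<in> {x} \<and> fst (f y) = Min ((\<lambda>z. fst (f z)) ` {x})) = x" by (rule some_equality) auto
  show "hvc a b f {z, x} z = (0 - a) * 1"
    unfolding hvc_def Let_def L1 R1 S using fz fx by simp
  have L2: "{fst (f y) | y. y \<in> {z, x} \<and> fst (f y) < fst (f x)} = {0}" using fz fx by (auto intro: exI[of _ z])
  have R2: "{y \<in> {z, x}. fst (f y) > fst (f x)} = {}" using fz fx by auto
  show "hvc a b f {z, x} x = 1 * (real n - 1 - b)"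
    unfolding hvc_def Let_def L2 R2 using fz fx by simp
qed

definition goodpop :: "nat \<Rightarrow> (bool list \<Rightarrow> int \<times> int) \<Rightarrow> bool list set \<Rightarrow> bool" where
  "goodpop n f P \<longleftrightarrow> P = {replicate n False} \<or> (\<exists>x. f x = (1, int n - 1) \<and> P = {replicate n False, x})"

lemma select_z:
  assumes n: "n \<ge> 2" and fz: "f (replicate n False) = (0, int n)" and g: "goodpop n f P"
  shows "nmuar_select (hvc (- (real n + 1)) (-1) f P) P = return_pmf (replicate n False)"
  using g unfolding goodpop_def
proof
  assume "P = {replicate n False}"
  then show ?thesis by (simp add: nmuar_select_def pmf_of_set_singleton)
next
  assume "\<exists>x. f x = (1, int n - 1) \<and> P = {replicate n False, x}"
  then obtain x where fx: "f x = (1, int n - 1)" and P: "P = {replicate n False, x}" by blast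
  have xz: "x \<noteq> replicate n False" using fz fx by auto
  note h = hvc_two(1)[where f=f and z="replicate n False" and x=x and n=n and a="- (real n + 1)" and b="-1", OF fz fx]
    hvc_two(2)[where f=f and z="replicate n False" and x=x and n=n and a="- (real n + 1)" and b="-1", OF fz fx]
  have ne: "hvc (- (real n + 1)) (-1) f P (replicate n False) \<noteq> hvc (- (real n + 1)) (-1) f P x"
    using h P by simp
  have mn: "Min (hvc (- (real n + 1)) (-1) f P ` P) = real n" using h P by simp
  have st: "{y \<in> P. hvc (- (real n + 1)) (-1) f P y \<noteq> Min (hvc (- (real n + 1)) (-1) f P ` P)} = {replicate n False}"
    unfolding mn using h P xz by auto
  show ?thesis unfolding nmuar_select_def st using ne P by (auto simp: pmf_of_set_singleton)
qed

lemma step_good: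
  assumes n: "n \<ge> 2" and fz: "f (replicate n False) = (0, int n)"
    and A2: "\<And>i. i < n \<Longrightarrow> f ((replicate n False)[i := True]) = (1, int n - 1)
               \<or> dominates f (replicate n False) ((replicate n False)[i := True])"
    and g: "goodpop n f P"
    and Q: "Q \<in> set_pmf (semo_step n f (hvc (- (real n + 1)) (-1) f) P)"
  shows "goodpop n f Q"
proof -
  let ?z = "replicate n False"
  obtain i where i: "i < n" and Qe: "Q = semo_update f P (?z[i := True])"
  proof -
    have "0 \<in> {..<n}" using n by simp
    then have ne: "{..<n} \<noteq> {}" by blast
    from Q obtain i where "i \<in> {..<n}" "Q = semo_update f P (?z[i := \<not> ?z ! i])"
      unfolding semo_step_def select_z[OF n fz g] mutate_def using ne by auto
    then show ?thesis using that by simp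
  qed
  have zP: "?z \<in> P" using g unfolding goodpop_def by auto
  show ?thesis using A2[OF i]
  proof
    assume fy: "f (?z[i := True]) = (1, int n - 1)"
    have nd: "\<not> (\<exists>y \<in> P. dominates f y (?z[i := True]))"
      using g fy fz unfolding goodpop_def dominates_def by auto
    have "{y \<in> P. \<not> weakly_dominates f (?z[i := True]) y} = {?z}"
      using g fy fz zP unfolding goodpop_def weakly_dominates_def by auto
    then have "Q = {?z[i := True], ?z}" using Qe nd unfolding semo_update_def by simp
    then show ?thesis using fy unfolding goodpop_def by auto
  next
    assume "dominates f ?z (?z[i := True])"
    then have "Q = P" using Qe zP unfolding semo_update_def by auto
    then show ?thesis using g by simp
  qed
qed

lemma traj_mono:
  assumes n: "n \<ge> 2" and fz: "f (replicate n False) = (0, int n)"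
    and A2: "\<And>i. i < n \<Longrightarrow> f ((replicate n False)[i := True]) = (1, int n - 1)
               \<or> dominates f (replicate n False) ((replicate n False)[i := True])"
  defines "B \<equiv> {tr. tr \<noteq> [] \<and> (\<forall>P\<in>set tr. goodpop n f P)}"
  shows "emeasure (semo_traj n f (hvc (- (real n + 1)) (-1) f) t) B
       \<le> emeasure (semo_traj n f (hvc (- (real n + 1)) (-1) f) (Suc t)) B"
proof -
  let ?T = "semo_traj n f (hvc (- (real n + 1)) (-1) f) t"
  let ?K = "\<lambda>tr. map_pmf (\<lambda>Q. tr @ [Q]) (semo_step n f (hvc (- (real n + 1)) (-1) f) (last tr))"
  have pt: "indicator B tr \<le> emeasure (measure_pmf (?K tr)) B" for tr
  proof (cases "tr \<in> B")
    case True
    then have g: "goodpop n f (last tr)" unfolding B_def by auto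
    have "emeasure (measure_pmf (?K tr)) B = 1"
    proof (rule measure_pmf.emeasure_eq_1_AE)
      show "B \<in> sets (measure_pmf (?K tr))" by simp
      show "AE x in measure_pmf (?K tr). x \<in> B"
      proof (rule AE_pmfI)
        fix y assume "y \<in> set_pmf (?K tr)"
        then obtain Q where Q: "Q \<in> set_pmf (semo_step n f (hvc (- (real n + 1)) (-1) f) (last tr))"
          and y: "y = tr @ [Q]" by auto
        have "goodpop n f Q" by (rule step_good[OF n fz A2 g Q])
        then show "y \<in> B" using True y unfolding B_def by auto
      qed
    qed
    then show ?thesis using True by simp
  qed (simp)
  have "emeasure ?T B = (\<integral>\<^sup>+ tr. indicator B tr \<partial>?T)" by simp
  also have "\<dots> \<le> (\<integral>\<^sup>+ tr. emeasure (measure_pmf (?K tr)) B \<partial>?T)"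
    by (rule nn_integral_mono) (rule pt)
  also have "\<dots> = emeasure (semo_traj n f (hvc (- (real n + 1)) (-1) f) (Suc t)) B"
    by simp
  finally show ?thesis .
qed

lemma traj_bound:
  assumes n: "n \<ge> 2" and fz: "f (replicate n False) = (0, int n)"
    and A2: "\<And>i. i < n \<Longrightarrow> f ((replicate n False)[i := True]) = (1, int n - 1)
               \<or> dominates f (replicate n False) ((replicate n False)[i := True])"
  defines "B \<equiv> {tr. tr \<noteq> [] \<and> (\<forall>P\<in>set tr. goodpop n f P)}"
  shows "1 / real (card (bitstrings n)) \<le> measure (semo_traj n f (hvc (- (real n + 1)) (-1) f) t) B"
proof (induction t)
  case 0
  have fin: "finite (bitstrings n)" unfolding bitstrings_def using finite_lists_length_eq[of "UNIV::bool set" n] by simp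
  have zin: "replicate n False \<in> bitstrings n" unfolding bitstrings_def by simp
  then have ne: "bitstrings n \<noteq> {}" by blast
  have "1 / real (card (bitstrings n)) = measure (pmf_of_set (bitstrings n)) {replicate n False}"
    using fin ne zin by (simp add: measure_pmf_single)
  also have "\<dots> \<le> measure (pmf_of_set (bitstrings n)) ((\<lambda>s. [{s}]) -` B)"
    by (rule measure_pmf.finite_measure_mono) (auto simp: B_def goodpop_def)
  finally show ?case by simp
next
  case (Suc t)
  have "emeasure (semo_traj n f (hvc (- (real n + 1)) (-1) f) t) B
       \<le> emeasure (semo_traj n f (hvc (- (real n + 1)) (-1) f) (Suc t)) B"
    unfolding B_def by (rule traj_mono[OF n fz A2])
  then have "measure (semo_traj n f (hvc (- (real n + 1)) (-1) f) t) B
       \<le> measure (semo_traj n f (hvc (- (real n + 1)) (-1) f) (Suc t)) B"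
    by (simp add: measure_pmf.emeasure_eq_measure)
  then show ?case using Suc.IH by linarith
qed

lemma stag_generic:
  assumes n: "n \<ge> 2" and fz: "f (replicate n False) = (0, int n)"
    and A2: "\<And>i. i < n \<Longrightarrow> f ((replicate n False)[i := True]) = (1, int n - 1)
               \<or> dominates f (replicate n False) ((replicate n False)[i := True])"
    and A3: "(int n, 0) \<in> pareto_front n f"
  shows "stagnates_with_positive_prob n f (hvc (- (real n + 1)) (-1) f)"
  unfolding stagnates_with_positive_prob_def
proof (intro exI[of _ "1 / real (card (bitstrings n))"] conjI allI)
  have fin: "finite (bitstrings n)" unfolding bitstrings_def using finite_lists_length_eq[of "UNIV::bool set" n] by simp
  have zin: "replicate n False \<in> bitstrings n" unfolding bitstrings_def by simp
  then have "card (bitstrings n) > 0" using fin card_gt_0_iff by blast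
  then show "1 / real (card (bitstrings n)) > 0" by simp
  fix t
  let ?B = "{tr. tr \<noteq> [] \<and> (\<forall>P\<in>set tr. goodpop n f P)}"
  have nc: "\<not> covers_front n f P" if "goodpop n f P" for P
  proof
    assume "covers_front n f P"
    then have "(int n, 0) \<in> f ` P" using A3 unfolding covers_front_def by auto
    then show False using that fz n unfolding goodpop_def by auto
  qed
  have "1 / real (card (bitstrings n)) \<le> measure (semo_traj n f (hvc (- (real n + 1)) (-1) f) t) ?B"
    by (rule traj_bound[OF n fz A2])
  also have "\<dots> \<le> measure (semo_traj n f (hvc (- (real n + 1)) (-1) f) t)
      {tr. \<forall>P \<in> set tr. \<not> covers_front n f P}"
    by (rule measure_pmf.finite_measure_mono) (auto dest: nc)
  finally show "measure (semo_traj n f (hvc (- (real n + 1)) (-1) f) t)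
      {tr. \<forall>P \<in> set tr. \<not> covers_front n f P} \<ge> 1 / real (card (bitstrings n))" .
qed

lemma rep_upd: "i < n \<Longrightarrow> (replicate n False)[i := True] = replicate i False @ True # replicate (n - i - 1) False"
proof (induction n arbitrary: i)
  case 0 then show ?case by simp
next
  case (Suc n) then show ?case by (cases i) auto
qed

lemma count_rep: "count_list (replicate k x) y = (if x = y then k else 0)"
  by (induction k) auto

lemma takeWhile_len_all: "length (takeWhile P xs) = length xs \<Longrightarrow> \<forall>x\<in>set xs. P x"
  by (induction xs) (auto split: if_splits)

lemma takeWhile_Not_all_true: "ys \<noteq> [] \<Longrightarrow> \<forall>x\<in>set ys. x \<Longrightarrow> takeWhile Not ys = []"
  by (cases ys) auto

lemma tw_not_rep: "takeWhile Not (replicate k False @ ys) = replicate k False @ takeWhile Not ys"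
  by (induction k) auto

lemma tw_id_rep: "takeWhile (\<lambda>b. b) (replicate (Suc k) False @ ys) = []"
  by simp

lemma omm_facts:
  assumes n: "n \<ge> 2"
  shows "OneMinMax n (replicate n False) = (0, int n)"
    and "\<And>i. i < n \<Longrightarrow> OneMinMax n ((replicate n False)[i := True]) = (1, int n - 1)
               \<or> dominates (OneMinMax n) (replicate n False) ((replicate n False)[i := True])"
    and "(int n, 0) \<in> pareto_front n (OneMinMax n)"
proof -
  show "OneMinMax n (replicate n False) = (0, int n)" by (simp add: OneMinMax_def count_rep)
  fix i assume "i < n"
  then show "OneMinMax n ((replicate n False)[i := True]) = (1, int n - 1)
               \<or> dominates (OneMinMax n) (replicate n False) ((replicate n False)[i := True])"
    by (simp add: rep_upd OneMinMax_def count_rep)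
next
  have w: "replicate n True \<in> bitstrings n" by (simp add: bitstrings_def)
  have fw: "OneMinMax n (replicate n True) = (int n, 0)" by (simp add: OneMinMax_def count_rep)
  have nd: "\<not> dominates (OneMinMax n) y (replicate n True)" if "y \<in> bitstrings n" for y
  proof -
    have c: "count_list y True \<le> n" using that count_le_length[of y True] by (simp add: bitstrings_def)
    have "fst (OneMinMax n y) = int (count_list y True)" "snd (OneMinMax n y) = int n - int (count_list y True)"
      by (simp_all add: OneMinMax_def)
    then show ?thesis unfolding dominates_def fw using c by simp
  qed
  have "replicate n True \<in> {x \<in> bitstrings n. \<not> (\<exists>y\<in>bitstrings n. dominates (OneMinMax n) y x)}"
    using w nd by blast
  then show "(int n, 0) \<in> pareto_front n (OneMinMax n)"
    unfolding pareto_front_def using fw by (metis (no_types, lifting) imageI)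
qed

lemma lotz_facts:
  assumes n: "n \<ge> 2"
  shows "LOTZ (replicate n False) = (0, int n)"
    and "\<And>i. i < n \<Longrightarrow> LOTZ ((replicate n False)[i := True]) = (1, int n - 1)
               \<or> dominates LOTZ (replicate n False) ((replicate n False)[i := True])"
    and "(int n, 0) \<in> pareto_front n LOTZ"
proof -
  show "LOTZ (replicate n False) = (0, int n)" by (simp add: LOTZ_def)
  fix i assume i: "i < n"
  have y: "(replicate n False)[i := True] = replicate i False @ True # replicate (n - i - 1) False"
    using i by (rule rep_upd)
  have r: "rev ((replicate n False)[i := True]) = replicate (n - i - 1) False @ True # replicate i False"
    unfolding y by simp
  have tz: "takeWhile Not (rev ((replicate n False)[i := True])) = replicate (n - i - 1) False"
    unfolding r tw_not_rep by simp
  show "LOTZ ((replicate n False)[i := True]) = (1, int n - 1)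
               \<or> dominates LOTZ (replicate n False) ((replicate n False)[i := True])"
  proof (cases i)
    case 0
    have "LOTZ ((replicate n False)[i := True]) = (1, int (n - 1))"
      unfolding LOTZ_def tz using 0 y by simp
    then show ?thesis using n by (simp add: of_nat_diff)
  next
    case (Suc k)
    have "LOTZ ((replicate n False)[i := True]) = (0, int (n - i - 1))"
    proof -
      have lo: "takeWhile (\<lambda>b. b) ((replicate n False)[i := True]) = []"
        unfolding y using Suc tw_id_rep[of k] by simp
      show ?thesis unfolding LOTZ_def tz lo by simp
    qed
    then show ?thesis using i unfolding dominates_def by (simp add: LOTZ_def)
  qed
next
  have w: "replicate n True \<in> bitstrings n" by (simp add: bitstrings_def)
  have fw: "LOTZ (replicate n True) = (int n, 0)" using n by (simp add: LOTZ_def)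
  have nd: "\<not> dominates LOTZ y (replicate n True)" if "y \<in> bitstrings n" for y
  proof
    assume d: "dominates LOTZ y (replicate n True)"
    have len: "length y = n" using that unfolding bitstrings_def by simp
    have le: "length (takeWhile (\<lambda>b. b) y) \<le> n" using len length_takeWhile_le[of "\<lambda>b. b" y] by simp
    have "fst (LOTZ y) \<ge> int n" using d fw unfolding dominates_def by simp
    then have "int (length (takeWhile (\<lambda>b. b) y)) \<ge> int n" by (simp add: LOTZ_def)
    then have eq: "length (takeWhile (\<lambda>b. b) y) = length y" using le len by linarith
    have all: "\<forall>x\<in>set y. x" using takeWhile_len_all[OF eq] by simp
    have "y = replicate n True" using len all by (intro replicate_eqI) auto
    then show False using d fw unfolding dominates_def by simp
  qed
  have "replicate n True \<in> {x \<in> bitstrings n. \<not> (\<exists>y\<in>bitstrings n. dominates LOTZ y x)}"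
    using w nd by blast
  then show "(int n, 0) \<in> pareto_front n LOTZ"
    unfolding pareto_front_def using fw by (metis (no_types, lifting) imageI)
qed

theorem theorem10:
  fixes n :: nat
  assumes "n \<ge> 2"
  shows "\<exists>r1 r2 :: real. r1 \<le> -1 \<and> r2 \<le> -1 \<and>
           stagnates_with_positive_prob n (OneMinMax n) (hvc r1 r2 (OneMinMax n)) \<and>
           stagnates_with_positive_prob n LOTZ (hvc r1 r2 LOTZ)"
proof -
  have A: "stagnates_with_positive_prob n (OneMinMax n) (hvc (- (real n + 1)) (-1) (OneMinMax n))"
    using omm_facts[OF assms] by (intro stag_generic[OF assms]) auto
  have B: "stagnates_with_positive_prob n LOTZ (hvc (- (real n + 1)) (-1) LOTZ)"
    using lotz_facts[OF assms] by (intro stag_generic[OF assms]) auto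
  show ?thesis using A B by (intro exI[of _ "- (real n + 1)"] exI[of _ "-1"]) simp
qed

end
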